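(* The functions $D,d:\mathbb{C}^{n\times r}\times\mathbb{C}^{n\times r}\to\mathbb{R}$ defined by $D(x,y)=\min_{U\in U(r)}\|x-yU\|_2$ and $d(x,y)=\min_{U\in U(r)}\|x-yU\|_2\|x+yU\|_2$ descend to metrics on $\mathbb{C}^{n\times r}/U(r)$.
   Context: $\|\cdot\|_2$ is the Frobenius norm, $U(r)$ the unitary group. $\mathbb{C}^{n\times r}/U(r)$ is the set of classes under $x\sim y$ iff $x=yU$ for some $U\in U(r)$. Equivalently $D(x,y)=\sqrt{\|x\|_2^2+\|y\|_2^2-2\|x^*y\|_1}$ and $d(x,y)=\sqrt{(\|x\|_2^2+\|y\|_2^2)^2-4\|x^*y\|_1^2}$, $\|\cdot\|_1$ the nuclear norm. *)

theory Defs
  imports "HOL-Analysis.Analysis"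
begin

text \<open>Complex n x r matrices are rendered as complex^'r^'n (rows indexed by 'n,
  columns by 'r); the dimensions n, r are arbitrary finite index types.\<close>

definition cadj :: "complex^'c^'b \<Rightarrow> complex^'b^'c" where
  "cadj A = (\<chi> i j. cnj (A $ j $ i))"

definition unitary_mat :: "complex^'r^'r \<Rightarrow> bool" where
  "unitary_mat U \<longleftrightarrow> U ** cadj U = mat 1 \<and> cadj U ** U = mat 1"

definition frob :: "complex^'c^'b \<Rightarrow> real" where
  "frob A = sqrt (\<Sum>i\<in>UNIV. \<Sum>j\<in>UNIV. (cmod (A $ i $ j))\<^sup>2)"

definition uequiv :: "complex^'r^'n \<Rightarrow> complex^'r^'n \<Rightarrow> bool" where
  "uequiv x y \<longleftrightarrow> (\<exists>U. unitary_mat U \<and> x = y ** U)"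

definition distD :: "complex^'r^'n \<Rightarrow> complex^'r^'n \<Rightarrow> real" where
  "distD x y = Inf {frob (x - y ** U) | U. unitary_mat U}"

definition distd :: "complex^'r^'n \<Rightarrow> complex^'r^'n \<Rightarrow> real" where
  "distd x y = Inf {frob (x - y ** U) * frob (x + y ** U) | U. unitary_mat U}"

definition descends_to_metric :: "(complex^'r^'n \<Rightarrow> complex^'r^'n \<Rightarrow> real) \<Rightarrow> bool" where
  "descends_to_metric f \<longleftrightarrow>
     (\<forall>x x' y y'. uequiv x x' \<and> uequiv y y' \<longrightarrow> f x y = f x' y') \<and>
     (\<forall>x y. f x y \<ge> 0) \<and>
     (\<forall>x y. f x y = 0 \<longleftrightarrow> uequiv x y) \<and>
     (\<forall>x y. f x y = f y x) \<and>
     (\<forall>x y z. f x z \<le> f x y + f y z)"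

end

theory Submission imports Defs begin

definition gref :: "'a::real_inner \<Rightarrow> 'a \<Rightarrow> real" where
  "gref w v = inner v v - 2 * (inner v w)\<^sup>2"

lemma gref_bound:
  fixes w u v :: "'a::real_inner"
  assumes w: "norm w = 1 \<or> w = 0"
  shows "gref w u - gref w v \<le> norm (u - v) * norm (u + v)"
proof -
  define s where "s = u - v"
  have e: "gref w u - gref w v = inner (s - (2 * inner s w) *\<^sub>R w) (u + v)"
    unfolding gref_def s_def
    by (simp add: inner_diff_left inner_add_right inner_diff_right inner_add_left inner_commute power2_eq_square algebra_simps)
  have n: "norm (s - (2 * inner s w) *\<^sub>R w) = norm s"
  proof -
    have "(norm (s - (2 * inner s w) *\<^sub>R w))\<^sup>2 = inner (s - (2 * inner s w) *\<^sub>R w) (s - (2 * inner s w) *\<^sub>R w)"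
      by (rule power2_norm_eq_inner)
    also have "\<dots> = inner s s - 4 * (inner s w)\<^sup>2 + 4 * (inner s w)\<^sup>2 * inner w w"
      by (simp add: inner_diff_left inner_diff_right inner_commute power2_eq_square algebra_simps)
    also have "\<dots> = (norm s)\<^sup>2 - 4 * (inner s w)\<^sup>2 + 4 * (inner s w)\<^sup>2 * (norm w)\<^sup>2"
      by (simp add: power2_norm_eq_inner)
    also have "\<dots> = (norm s)\<^sup>2" using w by auto
    finally show ?thesis using power2_eq_iff_nonneg[OF norm_ge_zero norm_ge_zero] by blast
  qed
  have "inner (s - (2 * inner s w) *\<^sub>R w) (u + v) \<le> norm (s - (2 * inner s w) *\<^sub>R w) * norm (u + v)"
    by (rule real_inner_class.Cauchy_Schwarz_ineq2[THEN abs_le_D1])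
  then show ?thesis using e n s_def by simp
qed

lemma gref_exists:
  fixes a c :: "'a::real_inner"
  assumes "a - c \<noteq> 0" "a + c \<noteq> 0"
  shows "\<exists>w. (norm w = 1 \<or> w = 0) \<and> gref w a - gref w c = norm (a - c) * norm (a + c)"
proof -
  define p where "p = (1 / norm (a - c)) *\<^sub>R (a - c)"
  define q where "q = (1 / norm (a + c)) *\<^sub>R (a + c)"
  have ac: "a - c = norm (a - c) *\<^sub>R p" "a + c = norm (a + c) *\<^sub>R q"
    using assms by (auto simp: p_def q_def)
  have np: "norm p = 1" "norm q = 1" using assms by (auto simp: p_def q_def)
  have key: "\<And>w. gref w a - gref w c = inner ((a - c) - (2 * inner (a - c) w) *\<^sub>R w) (a + c)"
    unfolding gref_def
    by (simp add: inner_diff_left inner_add_right inner_diff_right inner_add_left inner_commute power2_eq_square algebra_simps)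
  show ?thesis
  proof (cases "p = q")
    case True
    have "gref 0 a - gref 0 c = inner (a - c) (a + c)"
      using key[of 0] by simp
    also have "\<dots> = inner (norm (a - c) *\<^sub>R q) (norm (a + c) *\<^sub>R q)"
      using ac True by metis
    also have "\<dots> = norm (a - c) * norm (a + c) * inner q q" by simp
    also have "inner q q = 1" using np by (simp add: power2_norm_eq_inner[symmetric])
    finally show ?thesis by (intro exI[of _ 0]) simp
  next
    case False
    define w where "w = (1 / norm (p - q)) *\<^sub>R (p - q)"
    have nw: "norm w = 1" using False by (simp add: w_def)
    have pp: "inner p p = 1" "inner q q = 1" using np by (simp_all add: power2_norm_eq_inner[symmetric])
    have nz: "norm (p - q) \<noteq> 0" using False by simp
    have n2: "(norm (p - q))\<^sup>2 = 2 - 2 * inner p q"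
      using pp by (simp add: power2_norm_eq_inner inner_diff_left inner_diff_right inner_commute)
    have R: "p - (2 * inner p w) *\<^sub>R w = q"
    proof -
      have "(2 * inner p w) *\<^sub>R w = (2 * inner p (p - q) / (norm (p - q))\<^sup>2) *\<^sub>R (p - q)"
        by (simp add: w_def power2_eq_square)
      also have "2 * inner p (p - q) / (norm (p - q))\<^sup>2 = 1"
      proof -
        have "(norm (p - q))\<^sup>2 \<noteq> 0" using nz by simp
        then have "inner p q \<noteq> 1" using n2 by simp
        then show ?thesis using n2 pp by (simp add: inner_diff_right)
      qed
      finally show ?thesis by simp
    qed
    have "gref w a - gref w c = norm (a - c) * inner (p - (2 * inner p w) *\<^sub>R w) (a + c)"
      unfolding key by (subst (1 2) ac(1)) (simp add: inner_diff_left algebra_simps)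
    also have "\<dots> = norm (a - c) * norm (a + c) * inner q q"
      unfolding R by (subst ac(2)) simp
    finally show ?thesis using nw pp by auto
  qed
qed

lemma tri_d:
  fixes a b c :: "'a::real_inner"
  shows "norm (a - c) * norm (a + c) \<le> norm (a - b) * norm (a + b) + norm (b - c) * norm (b + c)"
proof (cases "a - c = 0 \<or> a + c = 0")
  case True then show ?thesis by (auto intro!: add_nonneg_nonneg)
next
  case False
  then obtain w where w: "norm w = 1 \<or> w = 0" and e: "gref w a - gref w c = norm (a - c) * norm (a + c)"
    using gref_exists by blast
  have "gref w a - gref w c = (gref w a - gref w b) + (gref w b - gref w c)" by simp
  then show ?thesis using e gref_bound[OF w, of a b] gref_bound[OF w, of b c] by linarith
qed


lemma frob_norm: "frob A = norm A"
  unfolding frob_def norm_vec_def L2_set_def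
  by (simp add: real_sqrt_pow2 sum_nonneg)

lemma cadj_mult: "cadj (A ** B) = cadj B ** cadj A"
  by (simp add: cadj_def matrix_matrix_mult_def vec_eq_iff mult.commute)

lemma cadj_cadj[simp]: "cadj (cadj A) = A"
  by (simp add: cadj_def vec_eq_iff)

lemma cadj_mat[simp]: "cadj (mat 1) = mat 1"
  by (simp add: cadj_def vec_eq_iff mat_def)

lemma mult_rdistrib: "(A + B) ** C = A ** C + B ** C"
  by (simp add: matrix_matrix_mult_def vec_eq_iff sum.distrib distrib_right)

lemma mult_rdiff: "(A - B) ** (C::complex^_^_) = A ** C - B ** C"
  by (simp add: matrix_matrix_mult_def vec_eq_iff sum_subtractf left_diff_distrib)

lemma mult_neg_r: "(A::complex^_^_) ** (- C) = - (A ** C)"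
  by (simp add: matrix_matrix_mult_def vec_eq_iff sum_negf)

lemma mult_neg_l: "(- A::complex^_^_) ** C = - (A ** C)"
  by (simp add: matrix_matrix_mult_def vec_eq_iff sum_negf)

lemma cadj_neg: "cadj (- A) = - cadj A"
  by (simp add: cadj_def vec_eq_iff)

lemma unitary_one: "unitary_mat (mat 1)"
  by (simp add: unitary_mat_def)

lemma unitary_mult: "unitary_mat U \<Longrightarrow> unitary_mat V \<Longrightarrow> unitary_mat (U ** V)"
  unfolding unitary_mat_def cadj_mult
  by (metis matrix_mul_assoc matrix_mul_rid)

lemma unitary_cadj: "unitary_mat U \<Longrightarrow> unitary_mat (cadj U)"
  unfolding unitary_mat_def by simp

lemma unitary_neg: "unitary_mat U \<Longrightarrow> unitary_mat (- U)"
  unfolding unitary_mat_def by (simp add: cadj_neg mult_neg_r mult_neg_l)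

lemma norm_sq_trace: "(norm A)\<^sup>2 = Re (\<Sum>i\<in>UNIV. (A ** cadj A) $ i $ i)"
proof -
  have "(norm A)\<^sup>2 = (\<Sum>i\<in>UNIV. \<Sum>j\<in>UNIV. (cmod (A $ i $ j))\<^sup>2)"
    unfolding frob_norm[of A, symmetric] frob_def by (simp add: sum_nonneg)
  also have "\<dots> = Re (\<Sum>i\<in>UNIV. \<Sum>j\<in>UNIV. A $ i $ j * cnj (A $ i $ j))"
    by (simp add: complex_mult_cnj cmod_power2 Re_sum)
  also have "\<dots> = Re (\<Sum>i\<in>UNIV. (A ** cadj A) $ i $ i)"
    by (simp add: matrix_matrix_mult_def cadj_def)
  finally show ?thesis .
qed

lemma norm_mult_unitary: assumes "unitary_mat U" shows "norm (A ** U) = norm A"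
proof -
  have "(A ** U) ** cadj (A ** U) = A ** cadj A"
    using assms unfolding cadj_mult unitary_mat_def
    by (metis matrix_mul_assoc matrix_mul_rid)
  then have "(norm (A ** U))\<^sup>2 = (norm A)\<^sup>2" by (simp add: norm_sq_trace)
  then show ?thesis using power2_eq_iff_nonneg[OF norm_ge_zero norm_ge_zero] by blast
qed

lemma cont_mult_left: "continuous_on S (\<lambda>U. (y::complex^'b^'a) ** U)"
  unfolding matrix_matrix_mult_def
  by (intro continuous_intros)

lemma cont_cadj: "continuous_on S (\<lambda>U. cadj (U::complex^'b^'a))"
  unfolding cadj_def
  by (intro continuous_intros)

lemma compact_unitary: "compact {U::complex^'r^'r. unitary_mat U}"
unfolding compact_eq_bounded_closed
proof (rule conjI)
  have "{U::complex^'r^'r. unitary_mat U} \<subseteq> cball 0 (sqrt (real CARD('r)))"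
  proof
    fix U :: "complex^'r^'r" assume "U \<in> {U. unitary_mat U}"
    then have "U ** cadj U = mat 1" by (simp add: unitary_mat_def)
    then have "(norm U)\<^sup>2 = real CARD('r)"
      by (simp add: norm_sq_trace mat_def)
    then show "U \<in> cball 0 (sqrt (real CARD('r)))"
      by (simp add: real_le_rsqrt)
  qed
  then show "bounded {U::complex^'r^'r. unitary_mat U}" using bounded_cball bounded_subset by blast
  have c1: "continuous_on UNIV (\<lambda>U::complex^'r^'r. U ** cadj U)"
    unfolding matrix_matrix_mult_def cadj_def by (intro continuous_intros)
  have c2: "continuous_on UNIV (\<lambda>U::complex^'r^'r. cadj U ** U)"
    unfolding matrix_matrix_mult_def cadj_def by (intro continuous_intros)
  have "{U::complex^'r^'r. unitary_mat U} = {U. U ** cadj U = mat 1} \<inter> {U. cadj U ** U = mat 1}"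
    by (auto simp: unitary_mat_def)
  moreover have "closed {U::complex^'r^'r. U ** cadj U = mat 1}"
    using closed_Collect_eq[OF c1 continuous_on_const] by simp
  moreover have "closed {U::complex^'r^'r. cadj U ** U = mat 1}"
    using closed_Collect_eq[OF c2 continuous_on_const] by simp
  ultimately show "closed {U::complex^'r^'r. unitary_mat U}" by auto
qed


lemma unit_cancel1: "unitary_mat U \<Longrightarrow> A ** U ** cadj U = A"
  unfolding unitary_mat_def by (simp add: matrix_mul_assoc[symmetric])

lemma unit_cancel2: "unitary_mat U \<Longrightarrow> A ** cadj U ** U = A"
  unfolding unitary_mat_def by (simp add: matrix_mul_assoc[symmetric])

lemma inf_attained:
  fixes g :: "complex^'r^'r \<Rightarrow> real"
  assumes "continuous_on {U. unitary_mat U} g"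
  shows "\<exists>U0. unitary_mat U0 \<and> Inf {g U | U. unitary_mat U} = g U0 \<and> (\<forall>U. unitary_mat U \<longrightarrow> g U0 \<le> g U)"
proof -
  obtain U0 where U0: "U0 \<in> {U. unitary_mat U}" "\<And>U. U \<in> {U. unitary_mat U} \<Longrightarrow> g U0 \<le> g U"
    using continuous_attains_inf[OF compact_unitary _ assms] unitary_one by blast
  have "Inf {g U | U. unitary_mat U} = g U0"
    by (rule cInf_eq_minimum) (use U0 in auto)
  then show ?thesis using U0 by auto
qed

lemma D_min:
  fixes x y :: "complex^'r^'n"
  shows "\<exists>U0. unitary_mat U0 \<and> distD x y = norm (x - y ** U0) \<and> (\<forall>U. unitary_mat U \<longrightarrow> distD x y \<le> norm (x - y ** U))"
proof -
  have "continuous_on {U. unitary_mat U} (\<lambda>U. frob (x - y ** U))"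
    unfolding frob_norm by (intro continuous_intros cont_mult_left)
  from inf_attained[OF this] obtain U0 where "unitary_mat U0" "Inf {frob (x - y ** U) |U. unitary_mat U} = frob (x - y ** U0)"
    "\<forall>U. unitary_mat U \<longrightarrow> frob (x - y ** U0) \<le> frob (x - y ** U)" by blast
  then show ?thesis unfolding distD_def frob_norm by auto
qed

lemma d_min:
  fixes x y :: "complex^'r^'n"
  shows "\<exists>U0. unitary_mat U0 \<and> distd x y = norm (x - y ** U0) * norm (x + y ** U0) \<and>
     (\<forall>U. unitary_mat U \<longrightarrow> distd x y \<le> norm (x - y ** U) * norm (x + y ** U))"
proof -
  have "continuous_on {U. unitary_mat U} (\<lambda>U. frob (x - y ** U) * frob (x + y ** U))"
    unfolding frob_norm by (intro continuous_intros cont_mult_left)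
  from inf_attained[OF this] obtain U0 where "unitary_mat U0" "Inf {frob (x - y ** U) * frob (x + y ** U) |U. unitary_mat U} = frob (x - y ** U0) * frob (x + y ** U0)"
    "\<forall>U. unitary_mat U \<longrightarrow> frob (x - y ** U0) * frob (x + y ** U0) \<le> frob (x - y ** U) * frob (x + y ** U)" by blast
  then show ?thesis unfolding distd_def frob_norm by auto
qed

lemma D_le:
  fixes x y :: "complex^'r^'n"
  shows "unitary_mat U \<Longrightarrow> distD x y \<le> norm (x - y ** U)"
  using D_min by blast

lemma d_le:
  fixes x y :: "complex^'r^'n"
  shows "unitary_mat U \<Longrightarrow> distd x y \<le> norm (x - y ** U) * norm (x + y ** U)"
  using d_min by blast

lemma D_inv_le:
  fixes x y :: "complex^'r^'n"
  assumes P: "unitary_mat P" and Q: "unitary_mat Q"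
  shows "distD (x ** P) (y ** Q) \<le> distD x y"
proof -
  obtain U0 where U0: "unitary_mat U0" "distD x y = norm (x - y ** U0)" using D_min by blast
  have "(y ** Q) ** (cadj Q ** U0 ** P) = (y ** U0) ** P"
    using Q by (simp add: matrix_mul_assoc unit_cancel1)
  then have "x ** P - (y ** Q) ** (cadj Q ** U0 ** P) = (x - y ** U0) ** P" by (simp add: mult_rdiff)
  moreover have "unitary_mat (cadj Q ** U0 ** P)"
    by (intro unitary_mult unitary_cadj P Q U0)
  ultimately show ?thesis using D_le[of "cadj Q ** U0 ** P" "x ** P" "y ** Q"] U0 norm_mult_unitary[OF P, of "x - y ** U0"] norm_mult_unitary[OF P, of "x + y ** U0"]
    by simp
qed

lemma d_inv_le:
  fixes x y :: "complex^'r^'n"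
  assumes P: "unitary_mat P" and Q: "unitary_mat Q"
  shows "distd (x ** P) (y ** Q) \<le> distd x y"
proof -
  obtain U0 where U0: "unitary_mat U0" "distd x y = norm (x - y ** U0) * norm (x + y ** U0)" using d_min by blast
  have "(y ** Q) ** (cadj Q ** U0 ** P) = (y ** U0) ** P"
    using Q by (simp add: matrix_mul_assoc unit_cancel1)
  then have "x ** P - (y ** Q) ** (cadj Q ** U0 ** P) = (x - y ** U0) ** P"
     "x ** P + (y ** Q) ** (cadj Q ** U0 ** P) = (x + y ** U0) ** P" by (simp_all add: mult_rdiff mult_rdistrib)
  moreover have "unitary_mat (cadj Q ** U0 ** P)"
    by (intro unitary_mult unitary_cadj P Q U0)
  ultimately show ?thesis using d_le[of "cadj Q ** U0 ** P" "x ** P" "y ** Q"] U0 norm_mult_unitary[OF P, of "x - y ** U0"] norm_mult_unitary[OF P, of "x + y ** U0"]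
    by simp
qed

lemma uequiv_sym: "uequiv x y \<Longrightarrow> uequiv y x"
proof -
  assume "uequiv x y"
  then obtain U where U: "unitary_mat U" "x = y ** U" unfolding uequiv_def by blast
  then have "y = x ** cadj U" by (simp add: unit_cancel1)
  then show ?thesis unfolding uequiv_def using unitary_cadj[OF U(1)] by blast
qed

lemma D_inv:
  fixes x y :: "complex^'r^'n"
  assumes "uequiv x x'" "uequiv y y'"
  shows "distD x y = distD x' y'"
proof -
  have "\<And>x y x' y' :: complex^'r^'n. uequiv x x' \<Longrightarrow> uequiv y y' \<Longrightarrow> distD x y \<le> distD x' y'"
    unfolding uequiv_def using D_inv_le by blast
  then show ?thesis using assms uequiv_sym by (meson order_antisym)
qed

lemma d_inv:
  fixes x y :: "complex^'r^'n"
  assumes "uequiv x x'" "uequiv y y'"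
  shows "distd x y = distd x' y'"
proof -
  have "\<And>x y x' y' :: complex^'r^'n. uequiv x x' \<Longrightarrow> uequiv y y' \<Longrightarrow> distd x y \<le> distd x' y'"
    unfolding uequiv_def using d_inv_le by blast
  then show ?thesis using assms uequiv_sym by (meson order_antisym)
qed

lemma D_sym_le:
  fixes x y :: "complex^'r^'n"
  shows "distD y x \<le> distD x y"
proof -
  obtain U0 where U0: "unitary_mat U0" "distD x y = norm (x - y ** U0)" using D_min by blast
  have "y - x ** cadj U0 = (y ** U0 - x) ** cadj U0"
    using U0 by (simp add: mult_rdiff unit_cancel1)
  then have "norm (y - x ** cadj U0) = norm (x - y ** U0)"
    using norm_mult_unitary[OF unitary_cadj[OF U0(1)], of "y ** U0 - x"] by (simp add: norm_minus_commute)
  then show ?thesis using D_le[OF unitary_cadj[OF U0(1)], of y x] U0 by simp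
qed

lemma d_sym_le:
  fixes x y :: "complex^'r^'n"
  shows "distd y x \<le> distd x y"
proof -
  obtain U0 where U0: "unitary_mat U0" "distd x y = norm (x - y ** U0) * norm (x + y ** U0)" using d_min by blast
  have "y - x ** cadj U0 = (y ** U0 - x) ** cadj U0" "y + x ** cadj U0 = (y ** U0 + x) ** cadj U0"
    using U0 by (simp_all add: mult_rdiff mult_rdistrib unit_cancel1)
  then have "norm (y - x ** cadj U0) = norm (x - y ** U0)" "norm (y + x ** cadj U0) = norm (x + y ** U0)"
    using norm_mult_unitary[OF unitary_cadj[OF U0(1)], of "y ** U0 - x"]
      norm_mult_unitary[OF unitary_cadj[OF U0(1)], of "y ** U0 + x"] by (simp_all add: norm_minus_commute add.commute)
  then show ?thesis using d_le[OF unitary_cadj[OF U0(1)], of y x] U0 by simp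
qed

lemma D_tri:
  fixes x y z :: "complex^'r^'n"
  shows "distD x z \<le> distD x y + distD y z"
proof -
  obtain U where U: "unitary_mat U" "distD x y = norm (x - y ** U)" using D_min by blast
  obtain V where V: "unitary_mat V" "distD y z = norm (y - z ** V)" using D_min by blast
  have e: "y ** U - z ** (V ** U) = (y - z ** V) ** U" by (simp add: mult_rdiff matrix_mul_assoc)
  have "distD x z \<le> norm (x - z ** (V ** U))" by (rule D_le[OF unitary_mult[OF V(1) U(1)]])
  also have "\<dots> \<le> norm (x - y ** U) + norm (y ** U - z ** (V ** U))"
    using norm_triangle_ineq[of "x - y ** U" "y ** U - z ** (V ** U)"] by simp
  also have "\<dots> = distD x y + distD y z" using U V e norm_mult_unitary[OF U(1), of "y - z ** V"] norm_mult_unitary[OF U(1), of "y + z ** V"] by simp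
  finally show ?thesis .
qed

lemma d_tri:
  fixes x y z :: "complex^'r^'n"
  shows "distd x z \<le> distd x y + distd y z"
proof -
  obtain U where U: "unitary_mat U" "distd x y = norm (x - y ** U) * norm (x + y ** U)" using d_min by blast
  obtain V where V: "unitary_mat V" "distd y z = norm (y - z ** V) * norm (y + z ** V)" using d_min by blast
  have e: "y ** U - z ** (V ** U) = (y - z ** V) ** U" "y ** U + z ** (V ** U) = (y + z ** V) ** U"
    by (simp_all add: mult_rdiff mult_rdistrib matrix_mul_assoc)
  have "distd x z \<le> norm (x - z ** (V ** U)) * norm (x + z ** (V ** U))" by (rule d_le[OF unitary_mult[OF V(1) U(1)]])
  also have "\<dots> \<le> norm (x - y ** U) * norm (x + y ** U) + norm (y ** U - z ** (V ** U)) * norm (y ** U + z ** (V ** U))"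
    by (rule tri_d)
  also have "\<dots> = distd x y + distd y z" using U V e norm_mult_unitary[OF U(1), of "y - z ** V"] norm_mult_unitary[OF U(1), of "y + z ** V"] by simp
  finally show ?thesis .
qed

lemma D_zero:
  fixes x y :: "complex^'r^'n"
  shows "distD x y = 0 \<longleftrightarrow> uequiv x y"
proof
  assume "distD x y = 0"
  then obtain U0 where "unitary_mat U0" "norm (x - y ** U0) = 0" using D_min[of x y] by auto
  then show "uequiv x y" unfolding uequiv_def by auto
next
  assume "uequiv x y"
  then obtain U where U: "unitary_mat U" "x = y ** U" unfolding uequiv_def by blast
  then have "distD x y \<le> 0" using D_le[OF U(1), of x y] by simp
  moreover have "distD x y \<ge> 0" using D_min[of x y] by auto
  ultimately show "distD x y = 0" by simp
qed

lemma d_zero: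
  fixes x y :: "complex^'r^'n"
  shows "distd x y = 0 \<longleftrightarrow> uequiv x y"
proof
  assume "distd x y = 0"
  then obtain U0 where U0: "unitary_mat U0" "norm (x - y ** U0) * norm (x + y ** U0) = 0" using d_min[of x y] by auto
  then have "x = y ** U0 \<or> x = y ** (- U0)" by (auto simp: mult_neg_r eq_neg_iff_add_eq_0)
  then show "uequiv x y" unfolding uequiv_def using U0(1) unitary_neg by blast
next
  assume "uequiv x y"
  then obtain U where U: "unitary_mat U" "x = y ** U" unfolding uequiv_def by blast
  then have "distd x y \<le> 0" using d_le[OF U(1), of x y] by simp
  moreover have "distd x y \<ge> 0" using d_min[of x y] by auto
  ultimately show "distd x y = 0" by simp
qed

theorem proposition2p3:
  fixes D d :: "complex^'r^'n \<Rightarrow> complex^'r^'n \<Rightarrow> real"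
  assumes "D = distD" and "d = distd"
  shows "(\<forall>x y. \<exists>U. unitary_mat U \<and> D x y = frob (x - y ** U)) \<and>
         (\<forall>x y. \<exists>U. unitary_mat U \<and> d x y = frob (x - y ** U) * frob (x + y ** U)) \<and>
         descends_to_metric D \<and> descends_to_metric d"
proof (intro conjI)
  show "\<forall>x y. \<exists>U. unitary_mat U \<and> D x y = frob (x - y ** U)"
    unfolding assms frob_norm using D_min by blast
  show "\<forall>x y. \<exists>U. unitary_mat U \<and> d x y = frob (x - y ** U) * frob (x + y ** U)"
    unfolding assms frob_norm using d_min by blast
  show "descends_to_metric D"
    unfolding descends_to_metric_def assms
  proof (intro conjI allI impI)
    fix x y :: "complex^'r^'n"
    show "distD x y \<ge> 0" using D_min[of x y] by auto
    show "distD x y = distD y x" using D_sym_le[of x y] D_sym_le[of y x] by simp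
  qed (auto simp: D_inv D_zero D_tri)
  show "descends_to_metric d"
    unfolding descends_to_metric_def assms
  proof (intro conjI allI impI)
    fix x y :: "complex^'r^'n"
    show "distd x y \<ge> 0" using d_min[of x y] by auto
    show "distd x y = distd y x" using d_sym_le[of x y] d_sym_le[of y x] by simp
  qed (auto simp: d_inv d_zero d_tri)
qed

end
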